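(* Let $d \ge 1$, $\alpha>0$, $p_0\in[1/2,1]$, and let $\mathcal{D}$ be the distribution on $\mathbb{R}^{d+1}\times\{-1,+1\}$ defined in the context, with $\eta=\alpha/\sqrt d$. Let $S_\infty$ be the $\ell_\infty$-perturbation set of radius $\epsilon=2\eta$ and $S_1$ the $\ell_1$-perturbation set of radius $\epsilon=2$. Then for every classifier $f:\mathbb{R}^{d+1}\to\{-1,+1\}$, $$\mathcal{R}^{\mathrm{avg}}_{\mathrm{adv}}(f;S_\infty,S_1)\;\ge\;\tfrac12 .$$
   Context: The distribution $\mathcal{D}$ over pairs $(\mathbf{x},y)$, $\mathbf{x}=(x_0,x_1,\dots,x_d)\in\mathbb{R}^{d+1}$, $y\in\{-1,+1\}$: $y$ is uniform on $\{-1,+1\}$; given $y$, $x_0=+y$ with probability $p_0$ and $x_0=-y$ with probability $1-p_0$; and $x_1,\dots,x_d$ are i.i.d. $\mathcal{N}(y\eta,1)$, independent of $x_0$, where $\eta=\alpha/\sqrt d$. For a set-valued perturbation model assigning to each input $\mathbf{x}$ a set $S(\mathbf{x})$ of allowed perturbed inputs, the adversarial risk of a classifier $f$ is $\mathcal{R}_{\mathrm{adv}}(f;S)=\Pr_{(\mathbf{x},y)\sim\mathcal{D}}[\exists\,\mathbf{x}'\in S(\mathbf{x}): f(\mathbf{x}')\neq y]$. The $\ell_p$-perturbation set of radius $\epsilon$ is $S(\mathbf{x})=\{\mathbf{x}+\mathbf{r}:\|\mathbf{r}\|_p\le\epsilon\}$. For perturbation sets $S_1,\dots,S_n$: $\mathcal{R}^{\mathrm{avg}}_{\mathrm{adv}}(f;S_1,\dots,S_n)=\frac1n\sum_i\mathcal{R}_{\mathrm{adv}}(f;S_i)$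 and $\mathcal{R}^{\mathrm{max}}_{\mathrm{adv}}(f;S_1,\dots,S_n)=\mathcal{R}_{\mathrm{adv}}(f;\cup_i S_i)$, where $(\cup_iS_i)(\mathbf{x})=\cup_iS_i(\mathbf{x})$. Classifiers are arbitrary measurable maps. *)

theory Defs
  imports "HOL-Probability.Probability"
begin

text \<open>Inputs x = (x_0,...,x_d) in R^(d+1) are represented as extensional functions
  nat => real on the index set {..d}, i.e. elements of space (input_space d).
  Labels y are reals taking values -1 or +1.\<close>

definition input_space :: "nat \<Rightarrow> (nat \<Rightarrow> real) measure" where
  "input_space d = PiM {..d} (\<lambda>_. borel)"

definition eta :: "nat \<Rightarrow> real \<Rightarrow> real" where
  "eta d \<alpha> = \<alpha> / sqrt (real d)"

definition x0_law :: "real \<Rightarrow> real \<Rightarrow> real measure" where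
  "x0_law p0 y = distr (measure_pmf (map_pmf (\<lambda>b. if b then y else - y) (bernoulli_pmf p0))) borel id"

definition xi_law :: "nat \<Rightarrow> real \<Rightarrow> real \<Rightarrow> real measure" where
  "xi_law d \<alpha> y = density lborel (normal_density (y * eta d \<alpha>) 1)"

definition cond_law :: "nat \<Rightarrow> real \<Rightarrow> real \<Rightarrow> real \<Rightarrow> (nat \<Rightarrow> real) measure" where
  "cond_law d \<alpha> p0 y = PiM {..d} (\<lambda>i. if i = 0 then x0_law p0 y else xi_law d \<alpha> y)"

definition data_dist :: "nat \<Rightarrow> real \<Rightarrow> real \<Rightarrow> ((nat \<Rightarrow> real) \<times> real) measure" where
  "data_dist d \<alpha> p0 =
     measure_pmf (pmf_of_set {-1, 1}) \<bind>
       (\<lambda>y. distr (cond_law d \<alpha> p0 y) (input_space d \<Otimes>\<^sub>M count_space UNIV) (\<lambda>x. (x, y)))"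

definition outer_prob :: "'a measure \<Rightarrow> 'a set \<Rightarrow> real" where
  "outer_prob M E = Inf {measure M A | A. A \<in> sets M \<and> E \<subseteq> A}"

definition linf_norm :: "nat \<Rightarrow> (nat \<Rightarrow> real) \<Rightarrow> real" where
  "linf_norm d r = Max ((\<lambda>i. \<bar>r i\<bar>) ` {..d})"

definition l1_norm :: "nat \<Rightarrow> (nat \<Rightarrow> real) \<Rightarrow> real" where
  "l1_norm d r = (\<Sum>i\<le>d. \<bar>r i\<bar>)"

definition linf_pert :: "nat \<Rightarrow> real \<Rightarrow> (nat \<Rightarrow> real) \<Rightarrow> (nat \<Rightarrow> real) set" where
  "linf_pert d \<epsilon> x = {(\<lambda>i. x i + r i) | r. r \<in> space (input_space d) \<and> linf_norm d r \<le> \<epsilon>}"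

definition l1_pert :: "nat \<Rightarrow> real \<Rightarrow> (nat \<Rightarrow> real) \<Rightarrow> (nat \<Rightarrow> real) set" where
  "l1_pert d \<epsilon> x = {(\<lambda>i. x i + r i) | r. r \<in> space (input_space d) \<and> l1_norm d r \<le> \<epsilon>}"

definition adv_risk ::
  "((nat \<Rightarrow> real) \<times> real) measure \<Rightarrow> ((nat \<Rightarrow> real) \<Rightarrow> real)
     \<Rightarrow> ((nat \<Rightarrow> real) \<Rightarrow> (nat \<Rightarrow> real) set) \<Rightarrow> real" where
  "adv_risk D f S = outer_prob D {(x, y) \<in> space D. \<exists>x'\<in>S x. f x' \<noteq> y}"

definition adv_risk_avg ::
  "((nat \<Rightarrow> real) \<times> real) measure \<Rightarrow> ((nat \<Rightarrow> real) \<Rightarrow> real)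
     \<Rightarrow> ((nat \<Rightarrow> real) \<Rightarrow> (nat \<Rightarrow> real) set) list \<Rightarrow> real" where
  "adv_risk_avg D f Ss = (\<Sum>S\<leftarrow>Ss. adv_risk D f S) / real (length Ss)"

end

theory Submission
  imports Defs
begin

lemma distr_PiM_finite_prob_space_gen:
  assumes fin: "finite I"
  assumes "product_prob_space M"
  assumes "product_prob_space M'"
  assumes [measurable]: "\<And>i. i \<in> I \<Longrightarrow> f i \<in> measurable (M i) (M' i)"
  shows   "distr (PiM I M) (PiM I M') (\<lambda>x. \<lambda>i\<in>I. f i (x i)) = PiM I (\<lambda>i. distr (M i) (M' i) (f i))"
proof -
  interpret M: product_prob_space M by fact
  interpret M': product_prob_space M' by fact
  define N where "N = (\<lambda>i. if i \<in> I then distr (M i) (M' i) (f i) else M' i)"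
  interpret N: product_prob_space N
    by (intro product_prob_spaceI) (auto simp: N_def M'.prob_space intro: M.M.prob_space_distr)
  have meas: "(\<lambda>x. \<lambda>i\<in>I. f i (x i)) \<in> Pi\<^sub>M I M \<rightarrow>\<^sub>M Pi\<^sub>M I M'"
    by measurable
  have "distr (PiM I M) (PiM I M') (\<lambda>x. \<lambda>i\<in>I. f i (x i)) = PiM I N"
  proof (rule N.PiM_eqI)
    have N_events_eq: "sets (Pi\<^sub>M I N) = sets (Pi\<^sub>M I M')"
      unfolding N_def by (intro sets_PiM_cong) auto
    also have "\<dots> = sets (distr (Pi\<^sub>M I M) (Pi\<^sub>M I M') (\<lambda>x. \<lambda>i\<in>I. f i (x i)))"
      by simp
    finally show "sets (distr (Pi\<^sub>M I M) (Pi\<^sub>M I M') (\<lambda>x. \<lambda>i\<in>I. f i (x i))) = sets (Pi\<^sub>M I N)"  ..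
    fix A assume A: "\<And>i. i \<in> I \<Longrightarrow> A i \<in> N.M.events i"
    have "emeasure (distr (Pi\<^sub>M I M) (Pi\<^sub>M I M') (\<lambda>x. \<lambda>i\<in>I. f i (x i))) (Pi\<^sub>E I A) =
          emeasure (Pi\<^sub>M I M) ((\<lambda>x. \<lambda>i\<in>I. f i (x i)) -` Pi\<^sub>E I A \<inter> space (Pi\<^sub>M I M))"
    proof (intro emeasure_distr meas)
      show "Pi\<^sub>E I A \<in> sets (Pi\<^sub>M I M')"
        unfolding N_events_eq [symmetric] by (intro sets_PiM_I_finite fin A)
    qed
    also have "(\<lambda>x. \<lambda>i\<in>I. f i (x i)) -` Pi\<^sub>E I A \<inter> space (Pi\<^sub>M I M) = Pi\<^sub>E I (\<lambda>i. f i -` A i \<inter> space (M i))"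
      using A by (auto simp: space_PiM PiE_def Pi_def extensional_def N_def)
    also have "emeasure (Pi\<^sub>M I M) (Pi\<^sub>E I (\<lambda>i. f i -` A i \<inter> space (M i))) =
          (\<Prod>i\<in>I. emeasure (M i) (f i -` A i \<inter> space (M i)))"
      using A by (intro M.emeasure_PiM fin) (auto simp: N_def)
    also have "\<dots> = (\<Prod>i\<in>I. emeasure (distr (M i) (M' i) (f i)) (A i))"
      using A by (intro prod.cong emeasure_distr [symmetric]) (auto simp: N_def)
    also have "\<dots> = (\<Prod>i\<in>I. emeasure (N i) (A i))"
      unfolding N_def by (intro prod.cong) (auto simp: N_def)
    finally show "emeasure (distr (Pi\<^sub>M I M) (Pi\<^sub>M I M') (\<lambda>x. \<lambda>i\<in>I. f i (x i))) (Pi\<^sub>E I A) = \<dots>" .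
  qed (rule fin)
  also have "PiM I N = PiM I (\<lambda>i. distr (M i) (M' i) (f i))"
    by (intro PiM_cong) (auto simp: N_def)
  finally show ?thesis .
qed

lemma x0_law_alt: "x0_law p0 y = distr (measure_pmf (bernoulli_pmf p0)) borel (\<lambda>b. if b then y else - y)"
  unfolding x0_law_def map_pmf_rep_eq
  by (subst distr_distr) (auto simp: comp_def)

lemma sets_x0_law[simp]: "sets (x0_law p0 y) = sets borel"
  by (simp add: x0_law_def)

lemma sets_xi_law[simp]: "sets (xi_law d \<alpha> y) = sets borel"
  by (simp add: xi_law_def)

lemma prob_x0_law: "prob_space (x0_law p0 y)"
  unfolding x0_law_def by (auto intro!: prob_space.prob_space_distr prob_space_measure_pmf)

lemma prob_xi_law: "prob_space (xi_law d \<alpha> y)"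
  unfolding xi_law_def by (rule prob_space_normal_density) simp

lemma x0_law_neg: "distr (x0_law p0 1) M uminus = x0_law p0 (-1)" if "sets M = sets borel"
proof -
  have "distr (x0_law p0 1) M uminus = distr (x0_law p0 1) borel uminus"
    by (rule distr_cong) (auto simp: that)
  also have "\<dots> = x0_law p0 (-1)"
    unfolding x0_law_alt by (subst distr_distr) (auto simp: comp_def intro!: distr_cong)
  finally show ?thesis .
qed

lemma xi_law_shift: "distr (xi_law d \<alpha> 1) M (\<lambda>t. t - 2 * eta d \<alpha>) = xi_law d \<alpha> (-1)" if "sets M = sets borel"
proof -
  let ?e = "eta d \<alpha>"
  have "distr (xi_law d \<alpha> 1) M (\<lambda>t. t - 2 * ?e) = distr (xi_law d \<alpha> 1) borel ((+) (- 2 * ?e))"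
    by (rule distr_cong) (auto simp: that)
  also have "\<dots> = density (distr lborel borel ((+) (- 2 * ?e))) (normal_density (- ?e) 1)"
  proof -
    have eq: "normal_density (- ?e) 1 (x - 2 * ?e) = normal_density ?e 1 x" for x
      by (simp add: normal_density_def power2_eq_square algebra_simps)
    show ?thesis
      unfolding xi_law_def by (subst density_distr) (auto simp: eq)
  qed
  also have "\<dots> = xi_law d \<alpha> (-1)"
    unfolding xi_law_def lborel_distr_plus by simp
  finally show ?thesis .
qed


definition gfun :: "nat \<Rightarrow> real \<Rightarrow> nat \<Rightarrow> real \<Rightarrow> real" where
  "gfun d \<alpha> i = (if i = 0 then uminus else (\<lambda>t. t - 2 * eta d \<alpha>))"

definition Phi :: "nat \<Rightarrow> real \<Rightarrow> (nat \<Rightarrow> real) \<Rightarrow> (nat \<Rightarrow> real)" where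
  "Phi d \<alpha> x = (\<lambda>i\<in>{..d}. gfun d \<alpha> i (x i))"

lemma sets_cond_law[simp]: "sets (cond_law d \<alpha> p0 y) = sets (input_space d)"
  unfolding cond_law_def input_space_def by (intro sets_PiM_cong) auto

lemma space_cond_law[simp]: "space (cond_law d \<alpha> p0 y) = space (input_space d)"
  by (rule sets_eq_imp_space_eq) simp

lemma prob_cond_law: "prob_space (cond_law d \<alpha> p0 y)"
  unfolding cond_law_def
  by (intro prob_space_PiM) (auto simp: prob_x0_law prob_xi_law)

lemma cond_shift: "distr (cond_law d \<alpha> p0 1) (input_space d) (Phi d \<alpha>) = cond_law d \<alpha> p0 (-1)"
proof -
  let ?M = "\<lambda>i. if i = 0 then x0_law p0 1 else xi_law d \<alpha> 1"
  let ?M' = "\<lambda>i. if i = 0 then x0_law p0 (-1) else xi_law d \<alpha> (-1)"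
  have "distr (cond_law d \<alpha> p0 1) (input_space d) (Phi d \<alpha>) =
        distr (PiM {..d} ?M) (PiM {..d} ?M') (\<lambda>x. \<lambda>i\<in>{..d}. gfun d \<alpha> i (x i))"
    unfolding cond_law_def Phi_def by (rule distr_cong) (auto simp: input_space_def intro!: sets_PiM_cong split: if_splits)
  also have "\<dots> = PiM {..d} (\<lambda>i. distr (?M i) (?M' i) (gfun d \<alpha> i))"
  proof (rule distr_PiM_finite_prob_space_gen)
    show "product_prob_space ?M" "product_prob_space ?M'"
      by (auto intro!: product_prob_spaceI simp: prob_x0_law prob_xi_law)
    fix i :: nat
    show "gfun d \<alpha> i \<in> ?M i \<rightarrow>\<^sub>M ?M' i"
      by (auto simp: gfun_def cong: measurable_cong_sets)
  qed simp
  also have "\<dots> = PiM {..d} ?M'"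
    by (intro PiM_cong) (auto simp: gfun_def x0_law_neg xi_law_shift)
  finally show ?thesis unfolding cond_law_def .
qed


lemma AE_x0: "AE x in cond_law d \<alpha> p0 1. x 0 \<in> {-1, 1}"
proof -
  have *: "AE t in x0_law p0 1. t \<in> {-1, 1}"
    unfolding x0_law_alt by (subst AE_distr_iff) auto
  show ?thesis
    unfolding cond_law_def
    apply (rule AE_PiM_component[of "{..d}" "\<lambda>i. if i = 0 then x0_law p0 1 else xi_law d \<alpha> 1" 0 "\<lambda>t. t \<in> {-1,1}"])
    using * apply (auto simp: prob_x0_law prob_xi_law)
    done
qed

lemma cover_ge1:
  assumes "A \<in> sets (input_space d)" "B \<in> sets (input_space d)"
    and "\<And>x. x \<in> space (input_space d) \<Longrightarrow> x 0 \<in> {-1,1} \<Longrightarrow> x \<in> A \<union> B"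
  shows "measure (cond_law d \<alpha> p0 1) A + measure (cond_law d \<alpha> p0 1) B \<ge> 1"
proof -
  interpret P: prob_space "cond_law d \<alpha> p0 1" by (rule prob_cond_law)
  have AB: "A \<union> B \<in> P.events" using assms by auto
  have "AE x in cond_law d \<alpha> p0 1. x \<in> A \<union> B"
    using AE_x0 AE_space by eventually_elim (use assms in auto)
  then have "P.prob (A \<union> B) = 1" using P.prob_eq_1[OF AB] by simp
  moreover have "P.prob (A \<union> B) \<le> P.prob A + P.prob B"
    by (rule measure_Un_le) (use assms in auto)
  ultimately show ?thesis by simp
qed

lemma D_sets: "sets (data_dist d \<alpha> p0) = sets (input_space d \<Otimes>\<^sub>M count_space UNIV)"
  unfolding data_dist_def by (subst sets_bind) auto

lemma D_space: "space (data_dist d \<alpha> p0) = space (input_space d) \<times> UNIV"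
  using D_sets[THEN sets_eq_imp_space_eq] by (simp add: space_pair_measure)

lemma D_measure:
  assumes A: "A \<in> sets (data_dist d \<alpha> p0)"
  shows "measure (data_dist d \<alpha> p0) A =
    (measure (cond_law d \<alpha> p0 1) {x\<in>space (input_space d). (x,1) \<in> A}
   + measure (cond_law d \<alpha> p0 (-1)) {x\<in>space (input_space d). (x,-1) \<in> A}) / 2"
proof -
  let ?R = "input_space d \<Otimes>\<^sub>M count_space (UNIV::real set)"
  let ?N = "\<lambda>y. distr (cond_law d \<alpha> p0 y) ?R (\<lambda>x. (x, y))"
  have meas: "(\<lambda>x. (x, y)) \<in> cond_law d \<alpha> p0 y \<rightarrow>\<^sub>M ?R" for y
    by (auto simp: measurable_cong_sets[OF sets_cond_law refl])
  have AR: "A \<in> sets ?R" using A D_sets by auto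
  have N: "?N \<in> measure_pmf (pmf_of_set {-1, 1::real}) \<rightarrow>\<^sub>M subprob_algebra ?R"
    by (auto simp: space_subprob_algebra intro!: prob_space_imp_subprob_space
        prob_space.prob_space_distr prob_cond_law meas)
  have "measure (data_dist d \<alpha> p0) A = (\<integral>y. measure (?N y) A \<partial>measure_pmf (pmf_of_set {-1, 1::real}))"
    unfolding data_dist_def by (rule measure_pmf.measure_bind[OF N AR])
  also have "\<dots> = (measure (?N (-1)) A + measure (?N 1) A) / 2"
    by (subst integral_pmf_of_set) auto
  finally have *: "measure (data_dist d \<alpha> p0) A = (measure (?N (-1)) A + measure (?N 1) A) / 2" .
  have eqs: "measure (?N y) A = measure (cond_law d \<alpha> p0 y) {x\<in>space (input_space d). (x,y) \<in> A}" for y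
    by (subst measure_distr[OF meas AR]) (auto intro!: arg_cong[where f="measure _"])
  show ?thesis unfolding * eqs by simp
qed


lemma space_I: "x \<in> space (input_space d) \<longleftrightarrow> (\<forall>i. \<not> i \<le> d \<longrightarrow> x i = undefined)"
  by (auto simp: input_space_def space_PiM PiE_iff extensional_def)

lemma Phi_space: "Phi d \<alpha> x \<in> space (input_space d)"
  by (auto simp: space_I Phi_def)

lemma Phi_meas: "Phi d \<alpha> \<in> input_space d \<rightarrow>\<^sub>M input_space d"
  unfolding Phi_def input_space_def
proof (rule measurable_restrict)
  fix i assume "i \<in> {..d}"
  then show "(\<lambda>x. gfun d \<alpha> i (x i)) \<in> borel_measurable (Pi\<^sub>M {..d} (\<lambda>_. borel))"
    by (cases "i = 0") (simp_all add: gfun_def)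
qed

lemma linf_le: 
  assumes "\<And>i. i \<le> d \<Longrightarrow> \<bar>r i\<bar> \<le> c" shows "linf_norm d r \<le> c"
  unfolding linf_norm_def using assms by (subst Max_le_iff) auto

lemma l1_single: "l1_norm d (\<lambda>i\<in>{..d}. if i = 0 then c else 0) = \<bar>c\<bar>"
proof -
  have "l1_norm d (\<lambda>i\<in>{..d}. if i = 0 then c else 0) = (\<Sum>i\<le>d. if i = 0 then \<bar>c\<bar> else 0)"
    unfolding l1_norm_def by (intro sum.cong) auto
  also have "\<dots> = \<bar>c\<bar>" by (subst sum.delta) auto
  finally show ?thesis .
qed

lemma point1:
  fixes f :: "(nat \<Rightarrow> real) \<Rightarrow> real"
  assumes x: "x \<in> space (input_space d)" and x0: "x 0 \<in> {-1, 1}" and e: "eta d \<alpha> \<ge> 0"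
  shows "(\<exists>x'\<in>linf_pert d (2 * eta d \<alpha>) x. f x' \<noteq> 1) \<or> (\<exists>x'\<in>l1_pert d 2 (Phi d \<alpha> x). f x' \<noteq> -1)"
proof -
  let ?e = "eta d \<alpha>"
  define r where "r = (\<lambda>i\<in>{..d}. if i = 0 then 0 else - 2 * ?e)"
  define r' where "r' = (\<lambda>i\<in>{..d}. if i = 0 then 2 * x 0 else 0)"
  define w where "w = (\<lambda>i. x i + r i)"
  have w1: "w \<in> linf_pert d (2 * ?e) x"
    unfolding linf_pert_def w_def
    by (rule CollectI, rule exI[of _ r]) (auto simp: r_def space_I e intro!: linf_le)
  have "w = (\<lambda>i. Phi d \<alpha> x i + r' i)"
    using x by (auto simp: w_def r_def r'_def Phi_def gfun_def space_I)
  then have w2: "w \<in> l1_pert d 2 (Phi d \<alpha> x)"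
    unfolding l1_pert_def
    using x0 by (intro CollectI exI[of _ r']) (auto simp: r'_def space_I l1_single)
  show ?thesis
  proof (cases "f w = 1")
    case True then show ?thesis using w2 by (intro disjI2 bexI[of _ w]) auto
  next
    case False then show ?thesis using w1 by blast
  qed
qed

lemma point2:
  fixes f :: "(nat \<Rightarrow> real) \<Rightarrow> real"
  assumes x: "x \<in> space (input_space d)" and x0: "x 0 \<in> {-1, 1}" and e: "eta d \<alpha> \<ge> 0"
  shows "(\<exists>x'\<in>l1_pert d 2 x. f x' \<noteq> 1) \<or> (\<exists>x'\<in>linf_pert d (2 * eta d \<alpha>) (Phi d \<alpha> x). f x' \<noteq> -1)"
proof -
  let ?e = "eta d \<alpha>"
  define r where "r = (\<lambda>i\<in>{..d}. if i = 0 then - 2 * x 0 else 0)"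
  define r' where "r' = (\<lambda>i\<in>{..d}. if i = 0 then 0 else 2 * ?e)"
  define w where "w = (\<lambda>i. x i + r i)"
  have w1: "w \<in> l1_pert d 2 x"
    unfolding l1_pert_def w_def
    using x0 by (intro CollectI exI[of _ r]) (auto simp: r_def space_I l1_single)
  have "w = (\<lambda>i. Phi d \<alpha> x i + r' i)"
    using x by (auto simp: w_def r_def r'_def Phi_def gfun_def space_I)
  then have w2: "w \<in> linf_pert d (2 * ?e) (Phi d \<alpha> x)"
    unfolding linf_pert_def
    by (intro CollectI exI[of _ r']) (auto simp: r'_def space_I e intro!: linf_le)
  show ?thesis
  proof (cases "f w = 1")
    case True then show ?thesis using w2 by (intro disjI2 bexI[of _ w]) auto
  next
    case False then show ?thesis using w1 by blast
  qed
qed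


lemma inf_sum:
  fixes X Y :: "real set"
  assumes "X \<noteq> {}" "Y \<noteq> {}" "\<forall>a\<in>X. a \<ge> 0" "\<forall>b\<in>Y. b \<ge> 0" "\<forall>a\<in>X. \<forall>b\<in>Y. a + b \<ge> 1"
  shows "Inf X + Inf Y \<ge> 1"
proof -
  have h: "1 - b \<le> Inf X" if "b \<in> Y" for b
    using assms(1) proof (rule cInf_greatest)
    fix x assume "x \<in> X" then show "1 - b \<le> x" using assms(5) that by force
  qed
  have "1 - Inf X \<le> Inf Y"
    using assms(2) proof (rule cInf_greatest)
    fix b assume "b \<in> Y" then show "1 - Inf X \<le> b" using h[of b] by linarith
  qed
  then show ?thesis by simp
qed

lemma sec_sets:
  assumes "X \<in> sets (data_dist d \<alpha> p0)"
  shows "{x\<in>space (input_space d). (x, y) \<in> X} \<in> sets (input_space d)"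
proof -
  have m: "(\<lambda>x. (x, y)) \<in> input_space d \<rightarrow>\<^sub>M input_space d \<Otimes>\<^sub>M count_space UNIV"
    by simp
  have "{x\<in>space (input_space d). (x, y) \<in> X} = (\<lambda>x. (x, y)) -` X \<inter> space (input_space d)" by auto
  also have "\<dots> \<in> sets (input_space d)"
    using assms by (intro measurable_sets[OF m]) (simp add: D_sets)
  finally show ?thesis .
qed

lemma shift_measure:
  assumes "X \<in> sets (input_space d)"
  shows "measure (cond_law d \<alpha> p0 (-1)) X = measure (cond_law d \<alpha> p0 1) (Phi d \<alpha> -` X \<inter> space (input_space d))"
proof -
  have m: "Phi d \<alpha> \<in> cond_law d \<alpha> p0 1 \<rightarrow>\<^sub>M input_space d"
    using Phi_meas by (simp cong: measurable_cong_sets)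
  show ?thesis
    unfolding cond_shift[symmetric, of d \<alpha> p0] using measure_distr[OF m assms] by simp
qed

lemma pair_bound:
  fixes f :: "(nat \<Rightarrow> real) \<Rightarrow> real" and Sa Sb :: "(nat \<Rightarrow> real) \<Rightarrow> (nat \<Rightarrow> real) set"
  assumes A: "A \<in> sets (data_dist d \<alpha> p0)"
      "{(x,y)\<in>space (data_dist d \<alpha> p0). \<exists>x'\<in>Sa x. f x' \<noteq> y} \<subseteq> A"
  and B: "B \<in> sets (data_dist d \<alpha> p0)"
      "{(x,y)\<in>space (data_dist d \<alpha> p0). \<exists>x'\<in>Sb x. f x' \<noteq> y} \<subseteq> B"
  and cov: "\<And>x. x \<in> space (input_space d) \<Longrightarrow> x 0 \<in> {-1,1} \<Longrightarrow>
      (\<exists>x'\<in>Sa x. f x' \<noteq> 1) \<or> (\<exists>x'\<in>Sb (Phi d \<alpha> x). f x' \<noteq> -1)"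
  and cov': "\<And>x. x \<in> space (input_space d) \<Longrightarrow> x 0 \<in> {-1,1} \<Longrightarrow>
      (\<exists>x'\<in>Sb x. f x' \<noteq> 1) \<or> (\<exists>x'\<in>Sa (Phi d \<alpha> x). f x' \<noteq> -1)"
  shows "measure (data_dist d \<alpha> p0) A + measure (data_dist d \<alpha> p0) B \<ge> 1"
proof -
  let ?I = "input_space d"
  let ?P = "cond_law d \<alpha> p0 1"
  define sec where "sec X (y::real) = {x\<in>space ?I. (x, y) \<in> X}" for X y
  have secs: "sec X y \<in> sets ?I" if "X \<in> sets (data_dist d \<alpha> p0)" for X y
    unfolding sec_def using sec_sets[OF that] .
  have pre: "Phi d \<alpha> -` sec X y \<inter> space ?I \<in> sets ?I" if "X \<in> sets (data_dist d \<alpha> p0)" for X y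
    using measurable_sets[OF Phi_meas secs[OF that]] .
  have c1: "measure ?P (sec A 1) + measure ?P (Phi d \<alpha> -` sec B (-1) \<inter> space ?I) \<ge> 1"
  proof (rule cover_ge1[OF secs[OF A(1)] pre[OF B(1)]])
    fix x assume x: "x \<in> space ?I" "x 0 \<in> {-1, 1}"
    from cov[OF x] show "x \<in> sec A 1 \<union> (Phi d \<alpha> -` sec B (-1) \<inter> space ?I)"
      using A(2) B(2) x(1) Phi_space[of d \<alpha> x] by (auto simp: sec_def D_space)
  qed
  have c2: "measure ?P (sec B 1) + measure ?P (Phi d \<alpha> -` sec A (-1) \<inter> space ?I) \<ge> 1"
  proof (rule cover_ge1[OF secs[OF B(1)] pre[OF A(1)]])
    fix x assume x: "x \<in> space ?I" "x 0 \<in> {-1, 1}"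
    from cov'[OF x] show "x \<in> sec B 1 \<union> (Phi d \<alpha> -` sec A (-1) \<inter> space ?I)"
      using A(2) B(2) x(1) Phi_space[of d \<alpha> x] by (auto simp: sec_def D_space)
  qed
  have "measure (data_dist d \<alpha> p0) A + measure (data_dist d \<alpha> p0) B =
     ((measure ?P (sec A 1) + measure ?P (Phi d \<alpha> -` sec B (-1) \<inter> space ?I))
     + (measure ?P (sec B 1) + measure ?P (Phi d \<alpha> -` sec A (-1) \<inter> space ?I))) / 2"
    unfolding D_measure[OF A(1)] D_measure[OF B(1)]
      shift_measure[OF secs[OF A(1)], unfolded sec_def] shift_measure[OF secs[OF B(1)], unfolded sec_def]
    by (simp add: sec_def field_simps)
  with c1 c2 show ?thesis by (simp add: field_simps)
qed

theorem theorem1: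
  fixes d :: nat and \<alpha> p0 :: real and f :: "(nat \<Rightarrow> real) \<Rightarrow> real"
  assumes "d \<ge> 1" and "\<alpha> > 0" and "1/2 \<le> p0" and "p0 \<le> 1"
    and "f \<in> input_space d \<rightarrow>\<^sub>M count_space UNIV"
    and "\<forall>x\<in>space (input_space d). f x \<in> {-1, 1}"
  shows "adv_risk_avg (data_dist d \<alpha> p0) f
           [linf_pert d (2 * eta d \<alpha>), l1_pert d 2] \<ge> 1/2"
proof -
  let ?D = "data_dist d \<alpha> p0"
  have e: "eta d \<alpha> \<ge> 0" using assms(2) by (simp add: eta_def)
  define E where "E S = {(x,y)\<in>space ?D. \<exists>x'\<in>S x. f x' \<noteq> y}" for S
  define M where "M S = {measure ?D A | A. A \<in> sets ?D \<and> E S \<subseteq> A}" for S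
  have ne: "M S \<noteq> {}" for S
    unfolding M_def E_def by blast
  have nn: "\<forall>a\<in>M S. a \<ge> 0" for S unfolding M_def by auto
  have "Inf (M (linf_pert d (2 * eta d \<alpha>))) + Inf (M (l1_pert d 2)) \<ge> 1"
  proof (rule inf_sum[OF ne ne nn nn], intro ballI)
    fix a b assume "a \<in> M (linf_pert d (2 * eta d \<alpha>))" "b \<in> M (l1_pert d 2)"
    then obtain A B where AB: "a = measure ?D A" "A \<in> sets ?D" "E (linf_pert d (2 * eta d \<alpha>)) \<subseteq> A"
        "b = measure ?D B" "B \<in> sets ?D" "E (l1_pert d 2) \<subseteq> B"
      unfolding M_def by blast
    show "a + b \<ge> 1" unfolding AB(1,4)
      by (rule pair_bound[where f=f and Sa="linf_pert d (2 * eta d \<alpha>)" and Sb="l1_pert d 2"])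
         (use AB point1[OF _ _ e, of _ f] point2[OF _ _ e, of _ f] in \<open>auto simp: E_def\<close>)
  qed
  then show ?thesis
    by (simp add: adv_risk_avg_def adv_risk_def outer_prob_def M_def E_def)
qed

end
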